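(* Let $\mathcal O_t=\{x\in\mathbb Z^d:N_{t,x}>0\}$ and let $|\mathcal O_t|$ be its cardinality. Suppose that $$\delta:=P\Big(\bigcap_{x\in\mathbb Z^d}\{A_{1,x,0}=0\}\Big)>0.$$ Then $P\big(\lim_{t\to\infty}|\mathcal O_t|\in\{0,\infty\}\big)=1$.
   Context: Let $d\ge1$. For $x\in\mathbb R^d$, $|x|=\sum_i|x_i|$. Let $A_t=(A_{t,x,y})_{x,y\in\mathbb Z^d}$, $t=1,2,\dots$, be i.i.d. random matrices on a probability space $(\Omega,\mathcal F,P)$ such that: (i) $A_{1,x,y}\ge0$; (ii) the columns $\{A_{1,\cdot,y}\}_{y\in\mathbb Z^d}$ are independent; (iii) $P[A_{1,x,y}^2]<\infty$ for all $x,y$; (iv) there is a nonrandom $r_A\in\mathbb N$ with $A_{1,x,y}=0$ a.s. if $|x-y|>r_A$; (v) $(A_{1,x+z,y+z})_{x,y}$ has the same law as $A_1$ for every $z\in\mathbb Z^d$; (vi) with $a_y=P[A_{1,0,y}]$, the set $\{x:\sum_y a_{x+y}a_y\neq0\}$ contains a linear basis of $\mathbb R^d$. Given a nonrandom $N_0\in[0,\infty)^{\mathbb Z^d}$ with $\{x:N_{0,x}>0\}$ finite and nonempty, define $N_{t,y}=\sum_xN_{t-1,x}A_{t,x,y}$ for $t\ge1$. *)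

theory Defs
  imports "HOL-Probability.Probability"
begin

text \<open>Sites of Z^d are vectors int^'d ('d a finite index type, so d >= 1).\<close>

definition l1norm :: "int ^ 'd \<Rightarrow> int" where
  "l1norm x = (\<Sum>i\<in>UNIV. \<bar>x $ i\<bar>)"

definition to_real_vec :: "int ^ 'd \<Rightarrow> real ^ 'd" where
  "to_real_vec x = (\<chi> i. real_of_int (x $ i))"

definition mat_space :: "(int ^ 'd \<Rightarrow> int ^ 'd \<Rightarrow> real) measure" where
  "mat_space = PiM UNIV (\<lambda>_. PiM UNIV (\<lambda>_. borel))"

definition col_space :: "(int ^ 'd \<Rightarrow> real) measure" where
  "col_space = PiM UNIV (\<lambda>_. borel)"

primrec popN :: "(nat \<Rightarrow> 'w \<Rightarrow> int ^ 'd \<Rightarrow> int ^ 'd \<Rightarrow> real) \<Rightarrow> (int ^ 'd \<Rightarrow> real)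
                 \<Rightarrow> nat \<Rightarrow> 'w \<Rightarrow> int ^ 'd \<Rightarrow> real" where
  "popN A N0 0 \<omega> = N0"
| "popN A N0 (Suc t) \<omega> = (\<lambda>y. infsum (\<lambda>x. popN A N0 t \<omega> x * A (Suc t) \<omega> x y) UNIV)"

definition occupied :: "(nat \<Rightarrow> 'w \<Rightarrow> int ^ 'd \<Rightarrow> int ^ 'd \<Rightarrow> real) \<Rightarrow> (int ^ 'd \<Rightarrow> real)
                 \<Rightarrow> nat \<Rightarrow> 'w \<Rightarrow> (int ^ 'd) set" where
  "occupied A N0 t \<omega> = {x. popN A N0 t \<omega> x > 0}"

definition ecard :: "'a set \<Rightarrow> ereal" where
  "ecard S = (if finite S then ereal (real (card S)) else \<infinity>)"

end

theory Submission
  imports Defs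
begin


definition trunc :: "nat \<Rightarrow> (int^'d \<Rightarrow> int^'d \<Rightarrow> real) \<Rightarrow> int^'d \<Rightarrow> int^'d \<Rightarrow> real" where
  "trunc r B x y = (if l1norm (x - y) \<le> int r then max 0 (B x y) else 0)"

definition nbhd :: "nat \<Rightarrow> (int^'d) set \<Rightarrow> (int^'d) set" where
  "nbhd r S = {y. \<exists>x\<in>S. l1norm (x - y) \<le> int r}"

primrec Dset :: "nat \<Rightarrow> (int^'d \<Rightarrow> real) \<Rightarrow> nat \<Rightarrow> (int^'d) set" where
  "Dset r N0 0 = {x. 0 < N0 x}"
| "Dset r N0 (Suc t) = nbhd r (Dset r N0 t)"

primrec Nt :: "nat \<Rightarrow> (int^'d \<Rightarrow> real) \<Rightarrow> (nat \<Rightarrow> int^'d \<Rightarrow> int^'d \<Rightarrow> real) \<Rightarrow> nat \<Rightarrow> int^'d \<Rightarrow> real" where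
  "Nt r N0 H 0 = N0"
| "Nt r N0 H (Suc t) = (\<lambda>y. \<Sum>x\<in>Dset r N0 t. Nt r N0 H t x * trunc r (H (Suc t)) x y)"

definition Ot where "Ot r N0 H t = {x. 0 < Nt r N0 H t x}"

definition good where "good r N0 K H t = (Ot r N0 H t \<noteq> {} \<and> card (Ot r N0 H t) \<le> K)"

primrec Cnt where
  "Cnt r N0 K H 0 = (0::nat)"
| "Cnt r N0 K H (Suc t) = Cnt r N0 K H t + (if good r N0 K H t then 1 else 0)"

definition Zs :: "nat \<Rightarrow> (int^'d) set \<Rightarrow> (int^'d \<Rightarrow> int^'d \<Rightarrow> real) \<Rightarrow> bool" where
  "Zs r S B = (\<forall>y\<in>nbhd r S. \<forall>x. B x y = 0)"

lemma finite_ballr: "finite {z::int^'d. l1norm z \<le> int r}"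
proof -
  have sub: "{z::int^'d. l1norm z \<le> int r} \<subseteq> vec_lambda ` (PiE UNIV (\<lambda>_. {-int r..int r}))"
  proof
    fix z :: "int^'d" assume "z \<in> {z. l1norm z \<le> int r}"
    then have h: "(\<Sum>i\<in>UNIV. \<bar>z $ i\<bar>) \<le> int r" by (simp add: l1norm_def)
    have "\<And>i. \<bar>z $ i\<bar> \<le> int r"
    proof -
      fix i
      have "\<bar>z $ i\<bar> \<le> (\<Sum>i\<in>UNIV. \<bar>z $ i\<bar>)" by (rule member_le_sum) auto
      with h show "\<bar>z $ i\<bar> \<le> int r" by simp
    qed
    then have "\<And>i. -int r \<le> z$i \<and> z$i \<le> int r" by (smt (verit))
    then have "vec_nth z \<in> PiE UNIV (\<lambda>_. {-int r..int r})" by auto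
    then show "z \<in> vec_lambda ` (PiE UNIV (\<lambda>_. {-int r..int r}))"
      by (intro image_eqI[of _ _ "vec_nth z"]) auto
  qed
  show ?thesis by (rule finite_subset[OF sub]) (intro finite_imageI finite_PiE; simp)
qed

lemma nbhd_eq: "nbhd r S = (\<lambda>(x,z). x - z) ` (S \<times> {z. l1norm z \<le> int r})"
  unfolding nbhd_def by (force simp: image_iff)

lemma finite_nbhd: "finite S \<Longrightarrow> finite (nbhd r S)"
  unfolding nbhd_eq by (intro finite_imageI finite_cartesian_product finite_ballr)

lemma card_nbhd: "finite (S::(int^'d) set) \<Longrightarrow> card (nbhd r S) \<le> card S * card {z::int^'d. l1norm z \<le> int r}"
proof -
  assume fS: "finite S"
  have "card ((\<lambda>(x,z). x - z) ` (S \<times> {z::int^'d. l1norm z \<le> int r})) \<le> card (S \<times> {z::int^'d. l1norm z \<le> int r})"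
    by (rule card_image_le) (intro finite_cartesian_product fS finite_ballr)
  then show ?thesis unfolding nbhd_eq by (simp only: card_cartesian_product)
qed

lemma nbhd_mono_ne: "S \<noteq> {} \<Longrightarrow> nbhd r S \<noteq> {}"
  unfolding nbhd_def by (auto intro!: exI[of _ "SOME x. x\<in>S"] bexI[of _ "SOME x. x\<in>S"] simp: some_in_eq l1norm_def)

lemma finite_Dset: "finite {x. 0 < N0 x} \<Longrightarrow> finite (Dset r N0 t)"
  by (induction t) (auto simp: finite_nbhd)

lemma trunc_nonneg: "trunc r B x y \<ge> 0" by (simp add: trunc_def)

lemma Nt_nonneg: "(\<And>x. N0 x \<ge> 0) \<Longrightarrow> Nt r N0 H t x \<ge> 0"
  by (induction t arbitrary: x) (auto intro!: sum_nonneg mult_nonneg_nonneg trunc_nonneg)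

lemma Nt_supp: "(\<And>x. N0 x \<ge> 0) \<Longrightarrow> x \<notin> Dset r N0 t \<Longrightarrow> Nt r N0 H t x = 0"
proof (induction t arbitrary: x)
  case 0 then show ?case by (metis Dset.simps(1) Nt.simps(1) mem_Collect_eq order_less_le)
next
  case (Suc t)
  have "\<And>z. z \<in> Dset r N0 t \<Longrightarrow> trunc r (H (Suc t)) z x = 0"
    using Suc.prems(2) by (auto simp: trunc_def nbhd_def)
  then show ?case by simp
qed

lemma Ot_sub: assumes "\<And>x. N0 x \<ge> 0" shows "Ot r N0 H t \<subseteq> Dset r N0 t"
  unfolding Ot_def using Nt_supp[of N0, OF assms] by fastforce

lemma Ot_absorb: assumes "\<And>x. N0 x \<ge> 0" "Ot r N0 H t = {}" shows "Ot r N0 H (Suc t) = {}"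
proof -
  have "\<And>x. Nt r N0 H t x = 0" using assms Nt_nonneg[of N0 r H t] unfolding Ot_def
    by (metis empty_iff mem_Collect_eq order_less_le)
  then show ?thesis by (simp add: Ot_def)
qed

lemma Ot_absorb2: assumes "\<And>x. N0 x \<ge> 0" "Ot r N0 H t = {}" "t \<le> s" shows "Ot r N0 H s = {}"
  using assms(3)
proof (induction s rule: dec_induct)
  case base show ?case by (rule assms(2))
next
  case (step n) show ?case by (rule Ot_absorb[OF assms(1) \<open>Ot r N0 H n = {}\<close>])
qed

lemma Ot_kill: assumes "\<And>x. N0 x \<ge> 0" "Ot r N0 H t = S" "Zs r S (H (Suc t))"
  shows "Ot r N0 H (Suc t) = {}"
proof -
  have z: "\<And>x y. Nt r N0 H t x * trunc r (H (Suc t)) x y = 0"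
  proof -
    fix x y
    show "Nt r N0 H t x * trunc r (H (Suc t)) x y = 0"
    proof (cases "x \<in> S")
      case True
      then show ?thesis using assms(3) by (auto simp: Zs_def trunc_def nbhd_def)
    next
      case False
      then have "Nt r N0 H t x = 0" using assms(2) Nt_nonneg[of N0 r H t x, OF assms(1)]
        by (auto simp: Ot_def)
      then show ?thesis by simp
    qed
  qed
  show ?thesis by (simp add: Ot_def z)
qed

lemma Nt_cong: "(\<And>i. i \<in> {1..t} \<Longrightarrow> H i = H' i) \<Longrightarrow> Nt r N0 H t = Nt r N0 H' t"
  by (induction t) auto

lemma Ot_cong: "(\<And>i. i \<in> {1..t} \<Longrightarrow> H i = H' i) \<Longrightarrow> Ot r N0 H t = Ot r N0 H' t"
  unfolding Ot_def using Nt_cong by metis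

lemma good_cong: "(\<And>i. i \<in> {1..t} \<Longrightarrow> H i = H' i) \<Longrightarrow> good r N0 K H t = good r N0 K H' t"
  unfolding good_def using Ot_cong by metis

lemma Cnt_cong: "(\<And>i. i \<in> {1..t} \<Longrightarrow> H i = H' i) \<Longrightarrow> Cnt r N0 K H t = Cnt r N0 K H' t"
proof (induction t)
  case (Suc t)
  then have "good r N0 K H t = good r N0 K H' t" by (intro good_cong) auto
  with Suc show ?case by auto
qed simp

lemma Cnt_mono: "s \<le> t \<Longrightarrow> Cnt r N0 K H s \<le> Cnt r N0 K H t"
  by (induction t rule: dec_induct) auto




lemma mat_entry_meas[measurable]: "(\<lambda>B. B x y) \<in> borel_measurable mat_space"
  unfolding mat_space_def
  apply (rule measurable_compose[of "\<lambda>B. B x" _ "PiM UNIV (\<lambda>_. borel)"])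
   apply (rule measurable_component_singleton, simp)
  apply (rule measurable_component_singleton, simp)
  done

lemma hist_entry_meas: "i \<in> I \<Longrightarrow> (\<lambda>H. H i x y) \<in> borel_measurable (PiM I (\<lambda>_. mat_space))"
  apply (rule measurable_compose[of "\<lambda>H. H i" _ mat_space])
   apply (rule measurable_component_singleton, simp)
  apply (rule mat_entry_meas)
  done

lemma Nt_meas: "{1..t} \<subseteq> I \<Longrightarrow> (\<lambda>H. Nt r N0 H t y) \<in> borel_measurable (PiM I (\<lambda>_. mat_space))"
proof (induction t arbitrary: y)
  case 0 then show ?case by simp
next
  case (Suc t)
  have "{1..t} \<subseteq> I" using Suc.prems by auto
  then have ih: "\<And>y. (\<lambda>H. Nt r N0 H t y) \<in> borel_measurable (PiM I (\<lambda>_. mat_space))" using Suc.IH by auto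
  have e: "\<And>x y. (\<lambda>H. H (Suc t) x y) \<in> borel_measurable (PiM I (\<lambda>_. mat_space))"
    using Suc.prems by (intro hist_entry_meas) auto
  have "\<And>x. (\<lambda>H. trunc r (H (Suc t)) x y) \<in> borel_measurable (PiM I (\<lambda>_. mat_space))"
    unfolding trunc_def using e by measurable
  then show ?case using ih by simp
qed

lemma Ot_eq_iff:
  assumes "\<And>x. N0 x \<ge> 0"
  shows "(Ot r N0 H t = S) \<longleftrightarrow> (S \<subseteq> Dset r N0 t \<and> (\<forall>x\<in>Dset r N0 t. (0 < Nt r N0 H t x) = (x \<in> S)))"
  using Ot_sub[of N0 r H t, OF assms] unfolding Ot_def by auto

lemma Ot_pred:
  assumes "\<And>x. N0 x \<ge> 0" "finite {x. 0 < N0 x}" "{1..t} \<subseteq> I"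
  shows "Measurable.pred (PiM I (\<lambda>_. mat_space)) (\<lambda>H. Ot r N0 H t = S)"
proof -
  have [measurable]: "\<And>x. (\<lambda>H. Nt r N0 H t x) \<in> borel_measurable (PiM I (\<lambda>_. mat_space))"
    using assms(3) by (rule Nt_meas)
  have fin: "finite (Dset r N0 t)" using assms(2) by (rule finite_Dset)
  show ?thesis unfolding Ot_eq_iff[OF assms(1)]
    by (intro pred_intros_logic pred_intros_finite fin) (auto intro: pred_intros_logic)
qed

lemma good_iff:
  assumes "\<And>x. N0 x \<ge> 0"
  shows "good r N0 K H t \<longleftrightarrow> (\<exists>S\<in>Pow (Dset r N0 t). S \<noteq> {} \<and> card S \<le> K \<and> Ot r N0 H t = S)"
  using Ot_sub[of N0 r H t, OF assms] unfolding good_def by auto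

lemma good_pred:
  assumes "\<And>x. N0 x \<ge> 0" "finite {x. 0 < N0 x}" "{1..t} \<subseteq> I"
  shows "Measurable.pred (PiM I (\<lambda>_. mat_space)) (\<lambda>H. good r N0 K H t)"
proof -
  have fin: "finite (Pow (Dset r N0 t))" using assms(2) by (simp add: finite_Dset)
  show ?thesis unfolding good_iff[OF assms(1)]
    by (intro pred_intros_finite fin pred_intros_logic Ot_pred assms) auto
qed

lemma Cnt_pred:
  assumes "\<And>x. N0 x \<ge> 0" "finite {x. 0 < N0 x}" "{1..t} \<subseteq> I"
  shows "Measurable.pred (PiM I (\<lambda>_. mat_space)) (\<lambda>H. Cnt r N0 K H t = n)"
  using assms(3)
proof (induction t arbitrary: n)
  case 0 then show ?case by simp
next
  case (Suc t)
  have g: "Measurable.pred (PiM I (\<lambda>_. mat_space)) (\<lambda>H. good r N0 K H t)"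
    using Suc.prems by (intro good_pred assms) auto
  have ih: "\<And>n. Measurable.pred (PiM I (\<lambda>_. mat_space)) (\<lambda>H. Cnt r N0 K H t = n)"
  proof -
    have "{1..t} \<subseteq> I" using Suc.prems by auto
    then show "\<And>n. ?thesis n" using Suc.IH by auto
  qed
  have eq: "(\<lambda>H. Cnt r N0 K H (Suc t) = n) = (\<lambda>H. (good r N0 K H t \<and> (0 < n \<and> Cnt r N0 K H t = n - 1))
        \<or> (\<not> good r N0 K H t \<and> Cnt r N0 K H t = n))"
    by (auto simp: fun_eq_iff)
  show ?case unfolding eq
    by (intro pred_intros_logic g ih) simp
qed




lemma space_mat_space: "space mat_space = UNIV"
  by (simp add: mat_space_def space_PiM PiE_UNIV_domain)

lemma space_col_space: "space col_space = UNIV"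
  by (simp add: col_space_def space_PiM PiE_UNIV_domain)

lemma pred_comp: "f \<in> measurable M N \<Longrightarrow> Measurable.pred N P \<Longrightarrow> Measurable.pred M (\<lambda>x. P (f x))"
proof -
  assume f: "f \<in> measurable M N" and P: "Measurable.pred N P"
  have "{x \<in> space M. P (f x)} = f -` {y \<in> space N. P y} \<inter> space M"
    using measurable_space[OF f] by auto
  then show ?thesis using measurable_sets[OF f P[unfolded pred_def]] by (simp add: pred_def)
qed

locale bpw = prob_space M for M :: "'w measure" +
  fixes A :: "nat \<Rightarrow> 'w \<Rightarrow> int ^ 'd \<Rightarrow> int ^ 'd \<Rightarrow> real"
    and N0 :: "int ^ 'd \<Rightarrow> real"
    and rA :: nat
  assumes iid_indep: "indep_vars (\<lambda>_. mat_space) A {1..}"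
    and iid_dist: "\<And>t. t \<ge> 1 \<Longrightarrow> distr M mat_space (A t) = distr M mat_space (A 1)"
    and nonneg: "\<And>x y. AE \<omega> in M. A 1 \<omega> x y \<ge> 0"
    and cols_indep: "indep_vars (\<lambda>_. col_space) (\<lambda>y \<omega>. (\<lambda>x. A 1 \<omega> x y)) UNIV"
    and finite_range: "\<And>x y. l1norm (x - y) > int rA \<Longrightarrow> AE \<omega> in M. A 1 \<omega> x y = 0"
    and shift_inv: "\<And>z. distr M mat_space (\<lambda>\<omega>. (\<lambda>x y. A 1 \<omega> (x + z) (y + z)))
                         = distr M mat_space (A 1)"
    and N0_nonneg: "\<And>x. N0 x \<ge> 0"
    and N0_fin: "finite {x. N0 x > 0}"
    and delta_pos: "measure M {\<omega> \<in> space M. \<forall>x. A 1 \<omega> x 0 = 0} > 0"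
begin

definition "\<delta> = measure M {\<omega> \<in> space M. \<forall>x. A 1 \<omega> x 0 = 0}"

lemma A_meas: "t \<ge> 1 \<Longrightarrow> A t \<in> measurable M mat_space"
  using iid_indep unfolding indep_vars_def2 by auto

lemma prob_transfer:
  assumes t: "t \<ge> 1" and P: "Measurable.pred mat_space P"
  shows "prob {\<omega>\<in>space M. P (A t \<omega>)} = prob {\<omega>\<in>space M. P (A 1 \<omega>)}"
proof -
  have S: "{B \<in> space mat_space. P B} \<in> sets mat_space" using P by (simp add: pred_def)
  have "\<And>s. s \<ge> 1 \<Longrightarrow> prob {\<omega>\<in>space M. P (A s \<omega>)} = measure (distr M mat_space (A s)) {B \<in> space mat_space. P B}"
    by (subst measure_distr[OF A_meas S]) (auto simp: space_mat_space intro!: arg_cong[where f=prob])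
  then show ?thesis using iid_dist[OF t] t by simp
qed

lemma AE_transfer:
  assumes t: "t \<ge> 1" and P: "Measurable.pred mat_space P" and ae: "AE \<omega> in M. P (A 1 \<omega>)"
  shows "AE \<omega> in M. P (A t \<omega>)"
proof -
  have S: "{B \<in> space mat_space. P B} \<in> sets mat_space" using P by (simp add: pred_def)
  have "AE B in distr M mat_space (A 1). P B"
    using ae by (subst AE_distr_iff[OF A_meas S]) auto
  then have "AE B in distr M mat_space (A t). P B" by (subst iid_dist[OF t])
  then show ?thesis by (subst (asm) AE_distr_iff[OF A_meas[OF t] S]) auto
qed

definition "good0 \<omega> \<longleftrightarrow> (\<forall>t x y. t \<ge> 1 \<longrightarrow> (A t \<omega> x y \<ge> 0 \<and> (l1norm (x - y) > int rA \<longrightarrow> A t \<omega> x y = 0)))"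

lemma AE_good0: "AE \<omega> in M. good0 \<omega>"
  unfolding good0_def
proof (intro AE_all_countable[THEN iffD2] allI impI)
  fix t x y
  show "AE \<omega> in M. 1 \<le> t \<longrightarrow> 0 \<le> A t \<omega> x y \<and> (int rA < l1norm (x - y) \<longrightarrow> A t \<omega> x y = 0)"
  proof (cases "t \<ge> 1")
    case True
    have p1: "Measurable.pred mat_space (\<lambda>B. 0 \<le> B x y)" by measurable
    have p2: "Measurable.pred mat_space (\<lambda>B. B x y = 0)" by measurable
    have a1: "AE \<omega> in M. 0 \<le> A t \<omega> x y" by (rule AE_transfer[OF True p1 nonneg])
    show ?thesis
    proof (cases "int rA < l1norm (x - y)")
      case True2: True
      have a2: "AE \<omega> in M. A t \<omega> x y = 0" by (rule AE_transfer[OF True p2 finite_range[OF True2]])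
      from a1 a2 show ?thesis by eventually_elim auto
    next
      case False
      from a1 show ?thesis by eventually_elim (use False in auto)
    qed
  qed simp
qed

lemma popN_eq:
  assumes "good0 \<omega>"
  shows "popN A N0 t \<omega> = Nt rA N0 (\<lambda>i. A i \<omega>) t"
proof (induction t)
  case 0 then show ?case by simp
next
  case (Suc t)
  show ?case
  proof (rule ext)
    fix y
    have fin: "finite (Dset rA N0 t)" using N0_fin by (rule finite_Dset)
    have "popN A N0 (Suc t) \<omega> y = infsum (\<lambda>x. Nt rA N0 (\<lambda>i. A i \<omega>) t x * A (Suc t) \<omega> x y) UNIV"
      using Suc by simp
    also have "\<dots> = infsum (\<lambda>x. Nt rA N0 (\<lambda>i. A i \<omega>) t x * A (Suc t) \<omega> x y) (Dset rA N0 t)"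
      by (rule infsum_cong_neutral) (auto simp: Nt_supp[OF N0_nonneg])
    also have "\<dots> = (\<Sum>x\<in>Dset rA N0 t. Nt rA N0 (\<lambda>i. A i \<omega>) t x * trunc rA (A (Suc t) \<omega>) x y)"
      using assms fin unfolding good0_def trunc_def
      by (auto intro!: sum.cong simp: not_le)
    finally show "popN A N0 (Suc t) \<omega> y = Nt rA N0 (\<lambda>i. A i \<omega>) (Suc t) y" by simp
  qed
qed

end




lemma Zs_pred: assumes "finite S" shows "Measurable.pred mat_space (Zs r S)"
proof -
  have p: "\<And>x y. Measurable.pred mat_space (\<lambda>B. B x y = 0)" by measurable
  show ?thesis unfolding Zs_def[abs_def]
    by (intro pred_intros_finite finite_nbhd pred_intros_countable p assms)
qed

lemma Zc_pred: "Measurable.pred col_space (\<lambda>c. \<forall>x. c x = 0)"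
  unfolding col_space_def by measurable

context bpw begin

lemma R_meas: "(\<lambda>\<omega>. restrict (\<lambda>i. A i \<omega>) {1..t}) \<in> measurable M (PiM {1..t} (\<lambda>_. mat_space))"
  by (rule measurable_restrict) (auto intro: A_meas)

lemma hist_R: "\<And>i. i \<in> {1..t} \<Longrightarrow> (\<lambda>i. A i \<omega>) i = restrict (\<lambda>i. A i \<omega>) {1..t} i"
  by simp

lemma pred_Cnt: "Measurable.pred M (\<lambda>\<omega>. Cnt rA N0 K (\<lambda>i. A i \<omega>) t = n)"
proof -
  have "Measurable.pred M (\<lambda>\<omega>. Cnt rA N0 K (restrict (\<lambda>i. A i \<omega>) {1..t}) t = n)"
    by (rule pred_comp[OF R_meas Cnt_pred[OF N0_nonneg N0_fin]]) auto
  moreover have "\<And>\<omega>. Cnt rA N0 K (\<lambda>i. A i \<omega>) t = Cnt rA N0 K (restrict (\<lambda>i. A i \<omega>) {1..t}) t"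
    by (rule Cnt_cong) simp
  ultimately show ?thesis by simp
qed

lemma pred_Ot: "Measurable.pred M (\<lambda>\<omega>. Ot rA N0 (\<lambda>i. A i \<omega>) t = S)"
proof -
  have "Measurable.pred M (\<lambda>\<omega>. Ot rA N0 (restrict (\<lambda>i. A i \<omega>) {1..t}) t = S)"
    by (rule pred_comp[OF R_meas Ot_pred[OF N0_nonneg N0_fin]]) auto
  moreover have "\<And>\<omega>. Ot rA N0 (\<lambda>i. A i \<omega>) t = Ot rA N0 (restrict (\<lambda>i. A i \<omega>) {1..t}) t"
    by (rule Ot_cong) simp
  ultimately show ?thesis by simp
qed

lemma pred_good: "Measurable.pred M (\<lambda>\<omega>. good rA N0 K (\<lambda>i. A i \<omega>) t)"
proof -
  have "Measurable.pred M (\<lambda>\<omega>. good rA N0 K (restrict (\<lambda>i. A i \<omega>) {1..t}) t)"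
    by (rule pred_comp[OF R_meas good_pred[OF N0_nonneg N0_fin]]) auto
  moreover have "\<And>\<omega>. good rA N0 K (\<lambda>i. A i \<omega>) t = good rA N0 K (restrict (\<lambda>i. A i \<omega>) {1..t}) t"
    by (rule good_cong) simp
  ultimately show ?thesis by simp
qed

lemma pred_Zs: "t \<ge> 1 \<Longrightarrow> finite S \<Longrightarrow> Measurable.pred M (\<lambda>\<omega>. Zs rA S (A t \<omega>))"
  by (rule pred_comp[OF A_meas Zs_pred])

lemma sh_meas: "(\<lambda>\<omega>. (\<lambda>x y'. A 1 \<omega> (x + z) (y' + z))) \<in> measurable M mat_space"
  unfolding mat_space_def
proof (rule measurable_PiM_single')
  fix x :: "int^'d"
  show "(\<lambda>\<omega>. \<lambda>y'. A 1 \<omega> (x + z) (y' + z)) \<in> M \<rightarrow>\<^sub>M Pi\<^sub>M UNIV (\<lambda>_. borel)"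
  proof (rule measurable_PiM_single')
    fix y' :: "int^'d"
    show "(\<lambda>\<omega>. A 1 \<omega> (x + z) (y' + z)) \<in> borel_measurable M"
      by (rule measurable_compose[OF A_meas mat_entry_meas]) simp
  qed (simp add: space_PiM PiE_UNIV_domain)
qed (simp add: space_PiM PiE_UNIV_domain)

lemma W_sets: "{B. \<forall>x. B x 0 = 0} \<in> sets mat_space"
proof -
  have "Measurable.pred mat_space (\<lambda>B. \<forall>x. B x 0 = 0)" by measurable
  then show ?thesis by (simp add: pred_def space_mat_space)
qed

lemma col_prob: "prob {\<omega>\<in>space M. \<forall>x. A 1 \<omega> x y = 0} = \<delta>"
proof -
  let ?W = "{B. \<forall>x. B x 0 = 0}"
  have "prob {\<omega>\<in>space M. \<forall>x. A 1 \<omega> x y = 0} =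
        prob ((\<lambda>\<omega>. (\<lambda>x y'. A 1 \<omega> (x + y) (y' + y))) -` ?W \<inter> space M)"
  proof (intro arg_cong[where f=prob] set_eqI iffI)
    fix \<omega> assume "\<omega> \<in> {\<omega>\<in>space M. \<forall>x. A 1 \<omega> x y = 0}"
    then show "\<omega> \<in> (\<lambda>\<omega>. (\<lambda>x y'. A 1 \<omega> (x + y) (y' + y))) -` ?W \<inter> space M" by auto
  next
    fix \<omega> assume h: "\<omega> \<in> (\<lambda>\<omega>. (\<lambda>x y'. A 1 \<omega> (x + y) (y' + y))) -` ?W \<inter> space M"
    have "\<And>x. A 1 \<omega> x y = 0"
    proof -
      fix x
      have "A 1 \<omega> ((x - y) + y) (0 + y) = 0" using h by blast
      then show "A 1 \<omega> x y = 0" by simp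
    qed
    then show "\<omega> \<in> {\<omega>\<in>space M. \<forall>x. A 1 \<omega> x y = 0}" using h by auto
  qed
  also have "\<dots> = measure (distr M mat_space (\<lambda>\<omega>. (\<lambda>x y'. A 1 \<omega> (x + y) (y' + y)))) ?W"
    by (rule measure_distr[OF sh_meas W_sets, symmetric])
  also have "\<dots> = measure (distr M mat_space (A 1)) ?W" by (simp only: shift_inv)
  also have "\<dots> = prob (A 1 -` ?W \<inter> space M)"
    by (rule measure_distr[OF A_meas W_sets]) simp
  also have "\<dots> = \<delta>" unfolding \<delta>_def by (auto intro!: arg_cong[where f=prob])
  finally show ?thesis .
qed

lemma delta_le1: "\<delta> \<le> 1" unfolding \<delta>_def by simp

lemma delta_pos': "\<delta> > 0" unfolding \<delta>_def using delta_pos by simp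

lemma p_prod:
  assumes "S \<noteq> {}" "finite S"
  shows "prob {\<omega>\<in>space M. Zs rA S (A 1 \<omega>)} = \<delta> ^ card (nbhd rA S)"
proof -
  let ?J = "nbhd rA S"
  let ?E = "\<lambda>j. (\<lambda>\<omega>. (\<lambda>x. A 1 \<omega> x j)) -` {c. \<forall>x. c x = 0} \<inter> space M"
  have ind: "indep_sets (\<lambda>y. {(\<lambda>\<omega>. (\<lambda>x. A 1 \<omega> x y)) -` B \<inter> space M | B. B \<in> sets col_space}) UNIV"
    using cols_indep unfolding indep_vars_def2 by auto
  have Zc: "{c. \<forall>x. c x = 0} \<in> sets col_space"
    using Zc_pred by (simp add: pred_def space_col_space)
  have Jne: "?J \<noteq> {}" using assms(1) by (rule nbhd_mono_ne)
  have Jfin: "finite ?J" using assms(2) by (rule finite_nbhd)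
  have "prob (\<Inter>j\<in>?J. ?E j) = (\<Prod>j\<in>?J. prob (?E j))"
    apply (rule indep_setsD[OF ind]) using Jne Jfin Zc by blast+
  moreover have "(\<Inter>j\<in>?J. ?E j) = {\<omega>\<in>space M. Zs rA S (A 1 \<omega>)}"
    using Jne unfolding Zs_def by auto
  moreover have "\<And>j. prob (?E j) = \<delta>"
  proof -
    fix j show "prob (?E j) = \<delta>" by (subst col_prob[symmetric, of j]) (auto intro!: arg_cong[where f=prob])
  qed
  ultimately show ?thesis by simp
qed

definition "cc = card {z::int^'d. l1norm z \<le> int rA}"
definition "eps K = \<delta> ^ (K * cc)"

lemma eps_pos: "eps K > 0" unfolding eps_def using delta_pos' by simp
lemma eps_le1: "eps K \<le> 1" unfolding eps_def using delta_pos' delta_le1 by (simp add: power_le_one)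

lemma p_bound:
  assumes "S \<noteq> {}" "finite S" "card S \<le> K"
  shows "prob {\<omega>\<in>space M. Zs rA S (A 1 \<omega>)} \<ge> eps K"
proof -
  have "card (nbhd rA S) \<le> card S * cc" unfolding cc_def using assms(2) by (rule card_nbhd)
  also have "\<dots> \<le> K * cc" using assms(3) by simp
  finally have "card (nbhd rA S) \<le> K * cc" .
  then have "\<delta> ^ (K * cc) \<le> \<delta> ^ card (nbhd rA S)"
    using delta_pos' delta_le1 by (intro power_decreasing) auto
  then show ?thesis unfolding eps_def p_prod[OF assms(1,2)] .
qed

end



context bpw begin

lemma indep_step:
  assumes Xa: "Xa \<in> sets (PiM {1..t} (\<lambda>_. mat_space))" and Xb: "Xb \<in> sets mat_space"
  shows "prob {\<omega>\<in>space M. restrict (\<lambda>i. A i \<omega>) {1..t} \<in> Xa \<and> A (Suc t) \<omega> \<in> Xb}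
       = prob {\<omega>\<in>space M. restrict (\<lambda>i. A i \<omega>) {1..t} \<in> Xa} * prob {\<omega>\<in>space M. A (Suc t) \<omega> \<in> Xb}"
proof -
  define K where "K = (\<lambda>b::bool. if b then {1..t} else {Suc t})"
  have iv: "indep_vars (\<lambda>j. PiM (K j) (\<lambda>_. mat_space)) (\<lambda>j \<omega>. restrict (\<lambda>i. A i \<omega>) (K j)) UNIV"
    by (rule indep_vars_restrict[OF iid_indep]) (auto simp: K_def disjoint_family_on_def)
  have e1: "(\<lambda>j. PiM (K j) (\<lambda>_. mat_space)) = case_bool (PiM {1..t} (\<lambda>_. mat_space)) (PiM {Suc t} (\<lambda>_. mat_space))"
    by (auto simp: fun_eq_iff K_def split: bool.split)
  have e2: "(\<lambda>j \<omega>. restrict (\<lambda>i. A i \<omega>) (K j)) = case_bool (\<lambda>\<omega>. restrict (\<lambda>i. A i \<omega>) {1..t}) (\<lambda>\<omega>. restrict (\<lambda>i. A i \<omega>) {Suc t})"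
    by (auto simp: fun_eq_iff K_def split: bool.split)
  have ivar: "indep_var (PiM {1..t} (\<lambda>_. mat_space)) (\<lambda>\<omega>. restrict (\<lambda>i. A i \<omega>) {1..t})
                        (PiM {Suc t} (\<lambda>_. mat_space)) (\<lambda>\<omega>. restrict (\<lambda>i. A i \<omega>) {Suc t})"
    unfolding indep_var_def using iv unfolding e1 e2 .
  define Xb' where "Xb' = (\<lambda>f. f (Suc t)) -` Xb \<inter> space (PiM {Suc t} (\<lambda>_. mat_space))"
  have Xb': "Xb' \<in> sets (PiM {Suc t} (\<lambda>_. mat_space))"
  proof -
    have "(\<lambda>f. f (Suc t)) \<in> measurable (PiM {Suc t} (\<lambda>_. mat_space)) mat_space"
      using measurable_component_singleton[of "Suc t" "{Suc t}" "\<lambda>_. mat_space"] by simp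
    then show ?thesis unfolding Xb'_def by (rule measurable_sets[OF _ Xb])
  qed
  have sp: "\<And>\<omega>. restrict (\<lambda>i. A i \<omega>) {Suc t} \<in> space (PiM {Suc t} (\<lambda>_. mat_space))"
    by (simp add: space_PiM space_mat_space)
  have ind: "prob ((\<lambda>x. (restrict (\<lambda>i. A i x) {1..t}, restrict (\<lambda>i. A i x) {Suc t})) -` (Xa \<times> Xb') \<inter> space M) =
    prob ((\<lambda>x. restrict (\<lambda>i. A i x) {1..t}) -` Xa \<inter> space M) * prob ((\<lambda>x. restrict (\<lambda>i. A i x) {Suc t}) -` Xb' \<inter> space M)"
    by (rule indep_varD[OF ivar Xa Xb'])
  have eq1: "(\<lambda>x. (restrict (\<lambda>i. A i x) {1..t}, restrict (\<lambda>i. A i x) {Suc t})) -` (Xa \<times> Xb') \<inter> space M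
     = {\<omega>\<in>space M. restrict (\<lambda>i. A i \<omega>) {1..t} \<in> Xa \<and> A (Suc t) \<omega> \<in> Xb}"
    using sp unfolding Xb'_def by auto
  have eq2: "(\<lambda>x. restrict (\<lambda>i. A i x) {Suc t}) -` Xb' \<inter> space M = {\<omega>\<in>space M. A (Suc t) \<omega> \<in> Xb}"
    using sp unfolding Xb'_def by auto
  have eq3: "(\<lambda>x. restrict (\<lambda>i. A i x) {1..t}) -` Xa \<inter> space M = {\<omega>\<in>space M. restrict (\<lambda>i. A i \<omega>) {1..t} \<in> Xa}"
    by auto
  from ind show ?thesis unfolding eq1 eq2 eq3 .
qed

abbreviation "Cw K t \<omega> \<equiv> Cnt rA N0 K (\<lambda>i. A i \<omega>) t"
abbreviation "Ow t \<omega> \<equiv> Ot rA N0 (\<lambda>i. A i \<omega>) t"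
abbreviation "Gw K t \<omega> \<equiv> good rA N0 K (\<lambda>i. A i \<omega>) t"

lemma sets_pred: "Measurable.pred M P \<Longrightarrow> {\<omega>\<in>space M. P \<omega>} \<in> sets M"
  by (simp add: pred_def)


end


context bpw begin

lemma step_ineq:
  "prob {\<omega>\<in>space M. Cw K t \<omega> = n \<and> Gw K t \<omega> \<and> Ow (Suc t) \<omega> \<noteq> {}}
     \<le> (1 - eps K) * prob {\<omega>\<in>space M. Cw K t \<omega> = n \<and> Gw K t \<omega>}"
proof -
  define SS where "SS = {S\<in>Pow (Dset rA N0 t). S \<noteq> {} \<and> card S \<le> K}"
  have fin: "finite (Dset rA N0 t)" using N0_fin by (rule finite_Dset)
  then have SSfin: "finite SS" unfolding SS_def by simp
  have SSfin2: "\<And>S. S \<in> SS \<Longrightarrow> finite S" using fin unfolding SS_def by (auto intro: finite_subset)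
  define E where "E S = {\<omega>\<in>space M. Cw K t \<omega> = n \<and> Ow t \<omega> = S}" for S
  define F where "F S = {\<omega>\<in>space M. (Cw K t \<omega> = n \<and> Ow t \<omega> = S) \<and> \<not> Zs rA S (A (Suc t) \<omega>)}" for S
  have Esets: "\<And>S. E S \<in> sets M" unfolding E_def
    by (intro sets_pred pred_intros_logic pred_Cnt pred_Ot)
  have Fsets: "\<And>S. S \<in> SS \<Longrightarrow> F S \<in> sets M" unfolding F_def
    by (intro sets_pred pred_intros_logic pred_Cnt pred_Ot pred_Zs SSfin2) simp_all
  have gi: "\<And>\<omega>. Gw K t \<omega> \<longleftrightarrow> (\<exists>S\<in>SS. Ow t \<omega> = S)"
    unfolding SS_def good_iff[OF N0_nonneg] by blast
  have sub: "{\<omega>\<in>space M. Cw K t \<omega> = n \<and> Gw K t \<omega> \<and> Ow (Suc t) \<omega> \<noteq> {}} \<subseteq> (\<Union>S\<in>SS. F S)"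
  proof
    fix \<omega> assume h: "\<omega> \<in> {\<omega>\<in>space M. Cw K t \<omega> = n \<and> Gw K t \<omega> \<and> Ow (Suc t) \<omega> \<noteq> {}}"
    then have hs: "\<omega> \<in> space M" "Cw K t \<omega> = n" "Gw K t \<omega>" "Ow (Suc t) \<omega> \<noteq> {}" by simp_all
    from hs(3) obtain S where S: "S \<in> SS" "Ow t \<omega> = S" unfolding gi by blast
    have nz: "\<not> Zs rA S (A (Suc t) \<omega>)"
    proof
      assume "Zs rA S (A (Suc t) \<omega>)"
      then have "Ow (Suc t) \<omega> = {}" by (intro Ot_kill[OF N0_nonneg S(2)])
      with hs(4) show False by simp
    qed
    have "\<omega> \<in> F S" unfolding F_def using hs(1,2) S(2) nz by simp
    with S(1) show "\<omega> \<in> (\<Union>S\<in>SS. F S)" by (rule UN_I)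
  qed
  have FE: "\<And>S. S \<in> SS \<Longrightarrow> prob (F S) \<le> prob (E S) * (1 - eps K)"
  proof -
    fix S assume S: "S \<in> SS"
    have Sfin: "finite S" using S by (rule SSfin2)
    have Sne: "S \<noteq> {}" using S unfolding SS_def by simp
    have Sc: "card S \<le> K" using S unfolding SS_def by simp
    define Xa where "Xa = {H\<in>space (PiM {1..t} (\<lambda>_. mat_space)). Cnt rA N0 K H t = n \<and> Ot rA N0 H t = S}"
    have "Measurable.pred (PiM {1..t} (\<lambda>_. mat_space)) (\<lambda>H. Cnt rA N0 K H t = n \<and> Ot rA N0 H t = S)"
      by (intro pred_intros_logic Cnt_pred Ot_pred N0_nonneg N0_fin) auto
    then have Xa: "Xa \<in> sets (PiM {1..t} (\<lambda>_. mat_space))" by (simp add: pred_def Xa_def)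
    define Xb where "Xb = {B. \<not> Zs rA S B}"
    have "{B\<in>space mat_space. Zs rA S B} \<in> sets mat_space"
      using Zs_pred[OF Sfin, of rA] by (simp add: pred_def)
    then have "space mat_space - {B\<in>space mat_space. Zs rA S B} \<in> sets mat_space"
      by (rule sets.compl_sets)
    moreover have "Xb = space mat_space - {B\<in>space mat_space. Zs rA S B}"
      unfolding Xb_def space_mat_space by blast
    ultimately have Xb: "Xb \<in> sets mat_space" by simp
    have Rsp: "\<And>\<omega>. restrict (\<lambda>i. A i \<omega>) {1..t} \<in> space (PiM {1..t} (\<lambda>_. mat_space))"
      by (simp add: space_PiM space_mat_space)
    have cC: "\<And>\<omega>. Cw K t \<omega> = Cnt rA N0 K (restrict (\<lambda>i. A i \<omega>) {1..t}) t"
      by (rule Cnt_cong) simp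
    have cO: "\<And>\<omega>. Ow t \<omega> = Ot rA N0 (restrict (\<lambda>i. A i \<omega>) {1..t}) t"
      by (rule Ot_cong) simp
    have mem: "\<And>\<omega>. (restrict (\<lambda>i. A i \<omega>) {1..t} \<in> Xa) = (Cw K t \<omega> = n \<and> Ow t \<omega> = S)"
    proof -
      fix \<omega>
      show "(restrict (\<lambda>i. A i \<omega>) {1..t} \<in> Xa) = (Cw K t \<omega> = n \<and> Ow t \<omega> = S)"
        unfolding Xa_def mem_Collect_eq cC[of \<omega>] cO[of \<omega>] using Rsp[of \<omega>] by blast
    qed
    have eE: "E S = {\<omega>\<in>space M. restrict (\<lambda>i. A i \<omega>) {1..t} \<in> Xa}"
      unfolding E_def mem ..
    have eF: "F S = {\<omega>\<in>space M. restrict (\<lambda>i. A i \<omega>) {1..t} \<in> Xa \<and> A (Suc t) \<omega> \<in> Xb}"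
      unfolding F_def mem Xb_def mem_Collect_eq ..
    have pF: "prob (F S) = prob (E S) * prob {\<omega>\<in>space M. A (Suc t) \<omega> \<in> Xb}"
      unfolding eE eF by (rule indep_step[OF Xa Xb])
    have predZ: "Measurable.pred M (\<lambda>\<omega>. Zs rA S (A (Suc t) \<omega>))" by (rule pred_Zs[OF _ Sfin]) simp
    have "{\<omega>\<in>space M. A (Suc t) \<omega> \<in> Xb} = space M - {\<omega>\<in>space M. Zs rA S (A (Suc t) \<omega>)}"
      unfolding Xb_def by blast
    then have "prob {\<omega>\<in>space M. A (Suc t) \<omega> \<in> Xb} = 1 - prob {\<omega>\<in>space M. Zs rA S (A (Suc t) \<omega>)}"
      using prob_compl[OF sets_pred[OF predZ]] by simp
    also have "prob {\<omega>\<in>space M. Zs rA S (A (Suc t) \<omega>)} = prob {\<omega>\<in>space M. Zs rA S (A 1 \<omega>)}"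
      by (rule prob_transfer[OF _ Zs_pred[OF Sfin]]) simp
    also have "1 - \<dots> \<le> 1 - eps K" using p_bound[OF Sne Sfin Sc] by simp
    finally have "prob {\<omega>\<in>space M. A (Suc t) \<omega> \<in> Xb} \<le> 1 - eps K" .
    then show "prob (F S) \<le> prob (E S) * (1 - eps K)" unfolding pF
      by (rule mult_left_mono) simp
  qed
  have Eun: "{\<omega>\<in>space M. Cw K t \<omega> = n \<and> Gw K t \<omega>} = (\<Union>S\<in>SS. E S)"
    unfolding E_def gi by blast
  have Edisj: "disjoint_family_on E SS" unfolding disjoint_family_on_def E_def by blast
  have "prob {\<omega>\<in>space M. Cw K t \<omega> = n \<and> Gw K t \<omega> \<and> Ow (Suc t) \<omega> \<noteq> {}} \<le> prob (\<Union>S\<in>SS. F S)"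
    by (rule finite_measure_mono[OF sub]) (use SSfin Fsets in blast)
  also have "\<dots> \<le> (\<Sum>S\<in>SS. prob (F S))" by (rule measure_UNION_le[OF SSfin Fsets])
  also have "\<dots> \<le> (\<Sum>S\<in>SS. prob (E S) * (1 - eps K))" by (rule sum_mono[OF FE])
  also have "\<dots> = (1 - eps K) * (\<Sum>S\<in>SS. prob (E S))" unfolding sum_distrib_left by (simp add: mult.commute)
  also have "(\<Sum>S\<in>SS. prob (E S)) = prob (\<Union>S\<in>SS. E S)"
    by (rule measure_finite_Union[symmetric, OF SSfin _ Edisj]) (use Esets in \<open>auto simp: emeasure_eq_measure\<close>)
  finally show ?thesis unfolding Eun .
qed

end



lemma Cnt_first:
  assumes N0: "\<And>x. N0 x \<ge> 0" and h: "Suc (Suc n) \<le> Cnt r N0 K H T"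
  shows "\<exists>t<T. Cnt r N0 K H t = n \<and> good r N0 K H t \<and> Ot r N0 H (Suc t) \<noteq> {}"
proof -
  let ?C = "Cnt r N0 K H"
  obtain T' where T': "T = Suc T'" using h by (cases T) auto
  define P where "P t \<longleftrightarrow> Suc n \<le> ?C (Suc t)" for t
  have PT: "P T'" using h T' unfolding P_def by simp
  define t where "t = (LEAST t. P t)"
  have Pt: "P t" unfolding t_def using PT by (rule LeastI)
  have tle: "t \<le> T'" unfolding t_def using PT by (rule Least_le)
  have Ct: "?C t \<le> n"
  proof (cases t)
    case 0 then show ?thesis by simp
  next
    case (Suc t')
    then have "\<not> P t'" unfolding t_def using not_less_Least[of t' P] t_def by auto
    then show ?thesis using Suc unfolding P_def by simp
  qed
  have g: "good r N0 K H t" and Cn: "?C t = n"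
    using Pt Ct unfolding P_def by (auto split: if_splits)
  have "Ot r N0 H (Suc t) \<noteq> {}"
  proof
    assume e: "Ot r N0 H (Suc t) = {}"
    have const: "\<And>s. Suc t \<le> s \<Longrightarrow> ?C s = ?C (Suc t)"
    proof -
      fix s assume "Suc t \<le> s"
      then show "?C s = ?C (Suc t)"
      proof (induction s rule: dec_induct)
        case (step m)
        have "Ot r N0 H m = {}" using Ot_absorb2[OF N0 e] step.hyps by simp
        then have "\<not> good r N0 K H m" by (simp add: good_def)
        then show ?case using step.IH by simp
      qed simp
    qed
    have "Suc t \<le> T" using tle T' by simp
    then have "?C T = ?C (Suc t)" by (rule const)
    then show False using h g Cn by simp
  qed
  then show ?thesis using g Cn tle T' by (intro exI[of _ t]) auto
qed

lemma Cnt_after: "t1 < t2 \<Longrightarrow> good r N0 K H t1 \<Longrightarrow> Cnt r N0 K H t2 \<ge> Suc (Cnt r N0 K H t1)"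
  using Cnt_mono[of "Suc t1" t2 r N0 K H] by simp

lemma Cnt_unbounded:
  assumes "\<And>T0. \<exists>t\<ge>T0. good r N0 K H t"
  shows "\<exists>T. n \<le> Cnt r N0 K H T"
proof (induction n)
  case (Suc n)
  then obtain T where T: "n \<le> Cnt r N0 K H T" by auto
  obtain t where t: "t \<ge> T" "good r N0 K H t" using assms by blast
  have "Cnt r N0 K H (Suc t) \<ge> Suc (Cnt r N0 K H T)" using Cnt_mono[OF t(1), of r N0 K H] t(2) by simp
  then show ?case using T by (intro exI[of _ "Suc t"]) simp
qed simp

context bpw begin

definition "U K n T = {\<omega>\<in>space M. n \<le> Cw K T \<omega>}"

lemma U_sets: "U K n T \<in> sets M"
proof -
  have "Measurable.pred M (\<lambda>\<omega>. \<not> (\<exists>m\<in>{..<n}. Cw K T \<omega> = m))"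
    by (intro pred_intros_logic pred_intros_finite pred_Cnt) auto
  moreover have "\<And>\<omega>. (n \<le> Cw K T \<omega>) = (\<not> (\<exists>m\<in>{..<n}. Cw K T \<omega> = m))" by auto
  ultimately show ?thesis unfolding U_def by (simp add: pred_def)
qed

lemma U_bound: "prob (U K (Suc n) T) \<le> (1 - eps K) ^ n"
proof (induction n arbitrary: T)
  case 0 then show ?case by simp
next
  case (Suc n)
  define Fs where "Fs t = {\<omega>\<in>space M. Cw K t \<omega> = n \<and> Gw K t \<omega> \<and> Ow (Suc t) \<omega> \<noteq> {}}" for t
  define Es where "Es t = {\<omega>\<in>space M. Cw K t \<omega> = n \<and> Gw K t \<omega>}" for t
  have Fsets: "\<And>t. Fs t \<in> sets M" unfolding Fs_def
    by (intro sets_pred pred_intros_logic pred_Cnt pred_good pred_Ot)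
  have Esets: "\<And>t. Es t \<in> sets M" unfolding Es_def
    by (intro sets_pred pred_intros_logic pred_Cnt pred_good)
  have sub1: "U K (Suc (Suc n)) T \<subseteq> (\<Union>t\<in>{..<T}. Fs t)"
    unfolding U_def Fs_def using Cnt_first[OF N0_nonneg] by fastforce
  have sub2: "(\<Union>t\<in>{..<T}. Es t) \<subseteq> U K (Suc n) T"
    unfolding U_def Es_def using Cnt_after by fastforce
  have disj: "disjoint_family_on Es {..<T}"
    unfolding disjoint_family_on_def Es_def
    by (auto dest: Cnt_after) (metis Cnt_after Suc_n_not_le_n linorder_neqE_nat)
  have "prob (U K (Suc (Suc n)) T) \<le> prob (\<Union>t\<in>{..<T}. Fs t)"
    by (rule finite_measure_mono[OF sub1]) (use Fsets in auto)
  also have "\<dots> \<le> (\<Sum>t\<in>{..<T}. prob (Fs t))" by (rule measure_UNION_le) (use Fsets in auto)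
  also have "\<dots> \<le> (\<Sum>t\<in>{..<T}. (1 - eps K) * prob (Es t))"
    unfolding Fs_def Es_def by (intro sum_mono step_ineq)
  also have "\<dots> = (1 - eps K) * prob (\<Union>t\<in>{..<T}. Es t)"
    by (subst measure_finite_Union) (use Esets disj in \<open>auto simp: sum_distrib_left\<close>)
  also have "\<dots> \<le> (1 - eps K) * prob (U K (Suc n) T)"
    using eps_le1[of K] by (intro mult_left_mono finite_measure_mono[OF sub2] U_sets) auto
  also have "\<dots> \<le> (1 - eps K) * (1 - eps K) ^ n"
    using eps_le1[of K] Suc.IH by (intro mult_left_mono) auto
  finally show ?case by simp
qed

lemma io_null: "AE \<omega> in M. \<not> (\<forall>n. \<exists>T. n \<le> Cw K T \<omega>)"
proof -
  define B where "B = {\<omega>\<in>space M. \<forall>n. \<exists>T. n \<le> Cw K T \<omega>}"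
  have Bsets: "B \<in> sets M"
  proof -
    have "B = (\<Inter>n. \<Union>T. U K n T)" unfolding B_def U_def by auto
    then show ?thesis using U_sets by auto
  qed
  have bnd: "\<And>n. prob B \<le> (1 - eps K) ^ n"
  proof -
    fix n
    have inc: "incseq (\<lambda>T. U K (Suc n) T)"
      unfolding incseq_def U_def using Cnt_mono order_trans by fastforce
    have lim: "(\<lambda>T. prob (U K (Suc n) T)) \<longlonglongrightarrow> prob (\<Union>T. U K (Suc n) T)"
      by (rule Lim_measure_incseq) (use U_sets inc in \<open>auto simp: emeasure_eq_measure\<close>)
    have "prob (\<Union>T. U K (Suc n) T) \<le> (1 - eps K) ^ n"
      by (rule LIMSEQ_le_const2[OF lim]) (use U_bound in auto)
    moreover have "prob B \<le> prob (\<Union>T. U K (Suc n) T)"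
      by (rule finite_measure_mono) (use U_sets in \<open>auto simp: B_def U_def\<close>)
    ultimately show "prob B \<le> (1 - eps K) ^ n" by simp
  qed
  have "(\<lambda>n. (1 - eps K) ^ n) \<longlonglongrightarrow> 0"
    using eps_pos[of K] eps_le1[of K] by (intro LIMSEQ_power_zero) auto
  then have "prob B \<le> 0" by (rule LIMSEQ_le_const) (use bnd in auto)
  then have "prob B = 0" using measure_nonneg[of M B] by linarith
  then have "B \<in> null_sets M" using Bsets by (auto simp: emeasure_eq_measure)
  then show ?thesis by (rule AE_I') (auto simp: B_def)
qed

theorem main:
  "AE \<omega> in M. ((\<lambda>t. ecard (occupied A N0 t \<omega>)) \<longlonglongrightarrow> 0)
                    \<or> ((\<lambda>t. ecard (occupied A N0 t \<omega>)) \<longlonglongrightarrow> \<infinity>)"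
proof -
  have ae: "AE \<omega> in M. \<forall>K. \<not> (\<forall>n. \<exists>T. n \<le> Cw K T \<omega>)"
    using io_null by (subst AE_all_countable) auto
  from ae AE_good0 show ?thesis
  proof eventually_elim
    fix \<omega> assume io: "\<forall>K. \<not> (\<forall>n. \<exists>T. n \<le> Cw K T \<omega>)" and g0: "good0 \<omega>"
    have occ: "\<And>t. occupied A N0 t \<omega> = Ow t \<omega>"
      unfolding occupied_def Ot_def popN_eq[OF g0] ..
    have fin: "\<And>t. finite (Ow t \<omega>)"
      by (rule finite_subset[OF Ot_sub[OF N0_nonneg] finite_Dset[OF N0_fin]])
    show "((\<lambda>t. ecard (occupied A N0 t \<omega>)) \<longlonglongrightarrow> 0) \<or> ((\<lambda>t. ecard (occupied A N0 t \<omega>)) \<longlonglongrightarrow> \<infinity>)"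
    proof (cases "\<exists>t0. Ow t0 \<omega> = {}")
      case True
      then obtain t0 where t0: "Ow t0 \<omega> = {}" by blast
      have "eventually (\<lambda>t. ecard (occupied A N0 t \<omega>) = 0) sequentially"
        unfolding eventually_sequentially occ
        using Ot_absorb2[OF N0_nonneg t0] by (intro exI[of _ t0]) (auto simp: ecard_def zero_ereal_def)
      then show ?thesis by (intro disjI1 tendsto_eventually)
    next
      case False
      have "\<forall>r. eventually (\<lambda>t. ereal r < ecard (occupied A N0 t \<omega>)) sequentially"
      proof
        fix r :: real
        define K where "K = nat \<lceil>r\<rceil>"
        have "\<And>T0. \<not> (\<exists>t\<ge>T0. Gw K t \<omega>) \<or> True" by simp
        have "\<exists>T0. \<forall>t\<ge>T0. \<not> Gw K t \<omega>"
        proof (rule ccontr)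
          assume "\<not> (\<exists>T0. \<forall>t\<ge>T0. \<not> Gw K t \<omega>)"
          then have "\<And>T0. \<exists>t\<ge>T0. Gw K t \<omega>" by auto
          then have "\<forall>n. \<exists>T. n \<le> Cw K T \<omega>" using Cnt_unbounded by metis
          then show False using io by blast
        qed
        then obtain T0 where T0: "\<And>t. t \<ge> T0 \<Longrightarrow> \<not> Gw K t \<omega>" by blast
        have "\<And>t. t \<ge> T0 \<Longrightarrow> ereal r < ecard (occupied A N0 t \<omega>)"
        proof -
          fix t assume "t \<ge> T0"
          then have "\<not> Gw K t \<omega>" by (rule T0)
          then have "card (Ow t \<omega>) > K" using False unfolding good_def by auto
          then have "real (card (Ow t \<omega>)) > r" unfolding K_def by linarith
          then show "ereal r < ecard (occupied A N0 t \<omega>)" unfolding occ ecard_def using fin by simp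
        qed
        then show "eventually (\<lambda>t. ereal r < ecard (occupied A N0 t \<omega>)) sequentially"
          unfolding eventually_sequentially by blast
      qed
      then show ?thesis by (intro disjI2) (simp add: tendsto_PInfty)
    qed
  qed
qed

end


theorem lemma1p3:
  fixes M :: "'w measure"
    and A :: "nat \<Rightarrow> 'w \<Rightarrow> int ^ 'd \<Rightarrow> int ^ 'd \<Rightarrow> real"
    and N0 :: "int ^ 'd \<Rightarrow> real"
    and rA :: nat
  assumes prob: "prob_space M"
    and iid_indep: "prob_space.indep_vars M (\<lambda>_. mat_space) A {1..}"
    and iid_dist: "\<And>t. t \<ge> 1 \<Longrightarrow> distr M mat_space (A t) = distr M mat_space (A 1)"
    and nonneg: "\<And>x y. AE \<omega> in M. A 1 \<omega> x y \<ge> 0"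
    and cols_indep: "prob_space.indep_vars M (\<lambda>_. col_space) (\<lambda>y \<omega>. (\<lambda>x. A 1 \<omega> x y)) UNIV"
    and square_int: "\<And>x y. integrable M (\<lambda>\<omega>. (A 1 \<omega> x y)\<^sup>2)"
    and finite_range: "\<And>x y. l1norm (x - y) > int rA \<Longrightarrow> AE \<omega> in M. A 1 \<omega> x y = 0"
    and shift_inv: "\<And>z. distr M mat_space (\<lambda>\<omega>. (\<lambda>x y. A 1 \<omega> (x + z) (y + z)))
                         = distr M mat_space (A 1)"
    and nondeg: "\<exists>B \<subseteq> {x. infsum (\<lambda>y. (integral\<^sup>L M (\<lambda>\<omega>. A 1 \<omega> 0 (x + y)))
                                        * (integral\<^sup>L M (\<lambda>\<omega>. A 1 \<omega> 0 y))) UNIV \<noteq> 0}.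
                  independent (to_real_vec ` B) \<and> span (to_real_vec ` B) = UNIV"
    and N0_nonneg: "\<And>x. N0 x \<ge> 0"
    and N0_fin: "finite {x. N0 x > 0}"
    and N0_ne: "{x. N0 x > 0} \<noteq> {}"
    and delta_pos: "measure M {\<omega> \<in> space M. \<forall>x. A 1 \<omega> x 0 = 0} > 0"
  shows "AE \<omega> in M. ((\<lambda>t. ecard (occupied A N0 t \<omega>)) \<longlonglongrightarrow> 0)
                    \<or> ((\<lambda>t. ecard (occupied A N0 t \<omega>)) \<longlonglongrightarrow> \<infinity>)"
proof -
  interpret prob_space M by (rule prob)
  interpret bpw M A N0 rA
    by (unfold_locales; (rule iid_indep iid_dist nonneg cols_indep finite_range shift_inv N0_nonneg N0_fin delta_pos)?)
  show ?thesis by (rule main)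
qed

end
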